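(* Let $M$ be a connected smooth manifold of dimension $n\geq2$ with a pseudo-Riemannian metric $g$ and Levi-Civita connection $\nabla$, let $\xi$ be a vector field with $g(\xi,\xi)=\varepsilon\in\{1,-1\}$, let $\eta(X)=\varepsilon g(X,\xi)$, let $\widetilde\nabla_XY=\nabla_XY-\eta(Y)\nabla_X\xi+(\nabla_X\eta)(Y)\xi$, and let $LX=-\nabla_X\xi$. Define $R(X,Y,Z,W)=g(R(X,Y)Z,W)$ and $\widetilde R(X,Y,Z,W)=g(\widetilde R(X,Y)Z,W)$, where $R(X,Y)=[\nabla_X,\nabla_Y]-\nabla_{[X,Y]}$ and $\widetilde R(X,Y)=[\widetilde\nabla_X,\widetilde\nabla_Y]-\widetilde\nabla_{[X,Y]}$. Then $$\widetilde R(X,Y,Z,W)=R(X,Y,Z,W)-g\big((\nabla_XL)Y-(\nabla_YL)X,Z\big)\eta(W)+g\big((\nabla_XL)Y-(\nabla_YL)X,W\big)\eta(Z)+\varepsilon g(LX,W)g(LY,Z)-\varepsilon g(LX,Z)g(LY,W)$$ for all vector fields $X,Y,Z,W$. *)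

theory Defs
  imports Complex_Main
begin

text \<open>Algebraic (Koszul-style) model of a pseudo-Riemannian manifold.
  'f plays the role of the real algebra of smooth functions C(M),
  'v the C(M)-module of smooth vector fields.
  smult: multiplication of a vector field by a function;
  der X h: the derivative X(h) of a function h along X;
  br X Y: the Lie bracket [X,Y];
  g: the pseudo-Riemannian metric; nabla X Y: the Levi-Civita connection.\<close>

locale pseudo_riemannian_lc =
  fixes smult :: "'f::{comm_ring_1, real_algebra_1} \<Rightarrow> 'v::ab_group_add \<Rightarrow> 'v"
    and der :: "'v \<Rightarrow> 'f \<Rightarrow> 'f"
    and br :: "'v \<Rightarrow> 'v \<Rightarrow> 'v"
    and g :: "'v \<Rightarrow> 'v \<Rightarrow> 'f"
    and nabla :: "'v \<Rightarrow> 'v \<Rightarrow> 'v"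
  assumes smult_add_left: "smult (a + b) X = smult a X + smult b X"
    and smult_add_right: "smult a (X + Y) = smult a X + smult a Y"
    and smult_assoc: "smult a (smult b X) = smult (a * b) X"
    and smult_one: "smult 1 X = X"
    and der_add_fun: "der X (a + b) = der X a + der X b"
    and der_scaleR_fun: "der X (scaleR r a) = scaleR r (der X a)"
    and der_mult: "der X (a * b) = der X a * b + a * der X b"
    and der_add_field: "der (X + Y) a = der X a + der Y a"
    and der_smult_field: "der (smult b X) a = b * der X a"
    and br_der: "der (br X Y) a = der X (der Y a) - der Y (der X a)"
    and g_sym: "g X Y = g Y X"
    and g_add: "g (X + Y) Z = g X Z + g Y Z"
    and g_smult: "g (smult a X) Y = a * g X Y"
    and g_nondeg: "(\<forall>Y. g X Y = 0) \<Longrightarrow> X = 0"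
    and nabla_add_dir: "nabla (X + Y) Z = nabla X Z + nabla Y Z"
    and nabla_smult_dir: "nabla (smult a X) Y = smult a (nabla X Y)"
    and nabla_add: "nabla X (Y + Z) = nabla X Y + nabla X Z"
    and nabla_leibniz: "nabla X (smult a Y) = smult (der X a) Y + smult a (nabla X Y)"
    and torsion_free: "nabla X Y - nabla Y X = br X Y"
    and metric_compat: "der X (g Y Z) = g (nabla X Y) Z + g Y (nabla X Z)"

definition curv :: "('v::ab_group_add \<Rightarrow> 'v \<Rightarrow> 'v) \<Rightarrow> ('v \<Rightarrow> 'v \<Rightarrow> 'v) \<Rightarrow> 'v \<Rightarrow> 'v \<Rightarrow> 'v \<Rightarrow> 'v" where
  "curv br D X Y Z = D X (D Y Z) - D Y (D X Z) - D (br X Y) Z"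

definition eta1 :: "('v \<Rightarrow> 'v \<Rightarrow> 'f::comm_ring_1) \<Rightarrow> 'v \<Rightarrow> 'f \<Rightarrow> 'v \<Rightarrow> 'f" where
  "eta1 g xi eps X = eps * g X xi"

definition nabla_eta :: "('v \<Rightarrow> 'f::comm_ring_1 \<Rightarrow> 'f) \<Rightarrow> ('v \<Rightarrow> 'v \<Rightarrow> 'f) \<Rightarrow> ('v \<Rightarrow> 'v \<Rightarrow> 'v)
    \<Rightarrow> 'v \<Rightarrow> 'f \<Rightarrow> 'v \<Rightarrow> 'v \<Rightarrow> 'f" where
  "nabla_eta der g nabla xi eps X Y = der X (eta1 g xi eps Y) - eta1 g xi eps (nabla X Y)"

definition nabla_tilde :: "('f::comm_ring_1 \<Rightarrow> 'v::ab_group_add \<Rightarrow> 'v) \<Rightarrow> ('v \<Rightarrow> 'f \<Rightarrow> 'f)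
    \<Rightarrow> ('v \<Rightarrow> 'v \<Rightarrow> 'f) \<Rightarrow> ('v \<Rightarrow> 'v \<Rightarrow> 'v) \<Rightarrow> 'v \<Rightarrow> 'f \<Rightarrow> 'v \<Rightarrow> 'v \<Rightarrow> 'v" where
  "nabla_tilde smult der g nabla xi eps X Y =
     nabla X Y - smult (eta1 g xi eps Y) (nabla X xi) + smult (nabla_eta der g nabla xi eps X Y) xi"

definition Lop :: "('v::ab_group_add \<Rightarrow> 'v \<Rightarrow> 'v) \<Rightarrow> 'v \<Rightarrow> 'v \<Rightarrow> 'v" where
  "Lop nabla xi X = - nabla X xi"

definition nabla_L :: "('v::ab_group_add \<Rightarrow> 'v \<Rightarrow> 'v) \<Rightarrow> 'v \<Rightarrow> 'v \<Rightarrow> 'v \<Rightarrow> 'v" where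
  "nabla_L nabla xi X Y = nabla X (Lop nabla xi Y) - Lop nabla xi (nabla X Y)"

end

theory Submission
  imports Defs
begin

context pseudo_riemannian_lc
begin

lemma smult_zero_l: "smult 0 X = 0"
  using smult_add_left[of 0 0 X] by simp
lemma smult_zero_r: "smult a 0 = 0"
  using smult_add_right[of a 0 0] by simp
lemma smult_minus_l: "smult (- a) X = - smult a X"
proof -
  have "smult a X + smult (- a) X = 0" using smult_add_left[of a "- a" X] smult_zero_l by simp
  from minus_unique[OF this] show ?thesis by (rule sym)
qed
lemma smult_minus_r: "smult a (- X) = - smult a X"
proof -
  have "smult a X + smult a (- X) = 0" using smult_add_right[of a X "- X"] smult_zero_r by simp
  from minus_unique[OF this] show ?thesis by (rule sym)
qed
lemma smult_diff_l: "smult (a - b) X = smult a X - smult b X"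
  using smult_add_left[of a "- b" X] by (simp add: smult_minus_l)
lemma smult_diff_r: "smult a (X - Y) = smult a X - smult a Y"
  using smult_add_right[of a X "- Y"] by (simp add: smult_minus_r)

lemma g_zero: "g 0 Y = 0" using g_add[of 0 0 Y] by simp
lemma g_minus: "g (- X) Y = - g X Y"
proof -
  have "g X Y + g (- X) Y = 0" using g_add[of X "- X" Y] g_zero by simp
  from minus_unique[OF this] show ?thesis by (rule sym)
qed
lemma g_diff: "g (X - Y) Z = g X Z - g Y Z"
  using g_add[of X "- Y" Z] by (simp add: g_minus)
lemma g_add2: "g Z (X + Y) = g Z X + g Z Y" by (simp only: g_sym[of Z] g_add)
lemma g_minus2: "g Z (- X) = - g Z X" by (simp only: g_sym[of Z] g_minus)
lemma g_diff2: "g Z (X - Y) = g Z X - g Z Y" by (simp only: g_sym[of Z] g_diff)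
lemma g_smult2: "g Y (smult a X) = a * g Y X" by (simp only: g_sym[of Y] g_smult)

lemma nabla_zero: "nabla X 0 = 0" using nabla_add[of X 0 0] by simp
lemma nabla_minus: "nabla X (- Y) = - nabla X Y"
proof -
  have "nabla X Y + nabla X (- Y) = 0" using nabla_add[of X Y "- Y"] nabla_zero by simp
  from minus_unique[OF this] show ?thesis by (rule sym)
qed
lemma nabla_diff: "nabla X (Y - Z) = nabla X Y - nabla X Z"
  using nabla_add[of X Y "- Z"] by (simp add: nabla_minus)
lemma nabla_zero_dir: "nabla 0 Y = 0" using nabla_add_dir[of 0 0 Y] by simp
lemma nabla_minus_dir: "nabla (- X) Y = - nabla X Y"
proof -
  have "nabla X Y + nabla (- X) Y = 0" using nabla_add_dir[of X "- X" Y] nabla_zero_dir by simp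
  from minus_unique[OF this] show ?thesis by (rule sym)
qed
lemma nabla_diff_dir: "nabla (X - Z) Y = nabla X Y - nabla Z Y"
  using nabla_add_dir[of X "- Z" Y] by (simp add: nabla_minus_dir)

lemma der_zero: "der X 0 = 0" using der_add_fun[of X 0 0] by simp
lemma der_one: "der X 1 = 0" using der_mult[of X 1 1] by simp
lemma der_minus: "der X (- a) = - der X a"
proof -
  have "der X a + der X (- a) = 0" using der_add_fun[of X a "- a"] der_zero by simp
  from minus_unique[OF this] show ?thesis by (rule sym)
qed
lemma der_diff: "der X (a - b) = der X a - der X b"
  using der_add_fun[of X a "- b"] by (simp add: der_minus)

lemma g_nabla_xi: "g (nabla X xi) xi = 0" if "g xi xi = eps" "eps = 1 \<or> eps = -1"
proof -
  have d: "der X eps = 0" using that(2) der_one der_minus[of X 1] by auto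
  have "der X (g xi xi) = g (nabla X xi) xi + g (nabla X xi) xi"
    using metric_compat[of X xi xi] g_sym[of xi "nabla X xi"] by simp
  hence "g (nabla X xi) xi + g (nabla X xi) xi = 0" using d that(1) by simp
  hence "scaleR 2 (g (nabla X xi) xi) = 0" by (simp only: scaleR_2)
  thus ?thesis by simp
qed

lemmas expand = nabla_add nabla_diff nabla_minus nabla_leibniz nabla_add_dir nabla_diff_dir
        nabla_minus_dir nabla_smult_dir der_add_fun der_diff der_minus der_mult der_one metric_compat
        smult_add_left smult_diff_l smult_minus_l smult_add_right smult_diff_r smult_minus_r smult_assoc
        g_add g_diff g_minus g_smult g_add2 g_diff2 g_minus2 g_smult2 der_add_field der_smult_field

definition "PP xi A V = smult (g V (nabla A xi)) xi - smult (g V xi) (nabla A xi)"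
definition "QQ xi A B V = nabla A (PP xi B V) + PP xi A (nabla B V) + PP xi A (PP xi B V)"

lemma nt1: "nabla_tilde smult der g nabla xi 1 A V = nabla A V + PP xi A V"
  by (simp add: nabla_tilde_def nabla_eta_def eta1_def metric_compat PP_def algebra_simps)

lemma PP_add: "PP xi A (U + V) = PP xi A U + PP xi A V"
  unfolding PP_def by (simp add: g_add smult_add_left algebra_simps)

lemma curv_vec: "curv br (nabla_tilde smult der g nabla xi 1) X Y Z =
   curv br nabla X Y Z + QQ xi X Y Z - QQ xi Y X Z - PP xi (br X Y) Z"
  unfolding curv_def nt1 QQ_def by (simp add: nabla_add PP_add algebra_simps)

lemma gP: "g (PP xi A V) W = g V (nabla A xi) * g xi W - g V xi * g (nabla A xi) W"
  unfolding PP_def by (simp add: g_diff g_smult)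

lemma gQ:
  assumes gx: "g xi xi = 1"
  shows "g (QQ xi A B Z) W =
    (g (nabla A Z) (nabla B xi) + g Z (nabla A (nabla B xi))) * g xi W + g Z (nabla B xi) * g (nabla A xi) W
    - (g (nabla A Z) xi + g Z (nabla A xi)) * g (nabla B xi) W - g Z xi * g (nabla A (nabla B xi)) W
    + g (nabla B Z) (nabla A xi) * g xi W - g (nabla B Z) xi * g (nabla A xi) W
    - g Z xi * g (nabla B xi) (nabla A xi) * g xi W - g Z (nabla B xi) * g (nabla A xi) W"
proof -
  have z1: "g (nabla V xi) xi = 0" for V using g_nabla_xi[OF gx] by simp
  have z2: "g xi (nabla V xi) = 0" for V using z1 g_sym by metis
  have a: "g (nabla A (PP xi B Z)) W = (g (nabla A Z) (nabla B xi) + g Z (nabla A (nabla B xi))) * g xi W + g Z (nabla B xi) * g (nabla A xi) W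
    - (g (nabla A Z) xi + g Z (nabla A xi)) * g (nabla B xi) W - g Z xi * g (nabla A (nabla B xi)) W"
    unfolding PP_def by (simp add: expand algebra_simps)
  have b: "g (PP xi A (PP xi B Z)) W = - g Z xi * g (nabla B xi) (nabla A xi) * g xi W - g Z (nabla B xi) * g (nabla A xi) W"
    unfolding gP unfolding PP_def by (simp add: expand z1 z2 gx algebra_simps)
  show ?thesis unfolding QQ_def g_add a b unfolding gP by (simp add: z1 z2 gx algebra_simps)
qed

lemma main_aux:
  assumes gx: "g xi xi = 1"
  shows "g (curv br (nabla_tilde smult der g nabla xi 1) X Y Z) W =
      g (curv br nabla X Y Z) W
      - g (nabla_L nabla xi X Y - nabla_L nabla xi Y X) Z * eta1 g xi 1 W
      + g (nabla_L nabla xi X Y - nabla_L nabla xi Y X) W * eta1 g xi 1 Z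
      + 1 * g (Lop nabla xi X) W * g (Lop nabla xi Y) Z
      - 1 * g (Lop nabla xi X) Z * g (Lop nabla xi Y) W"
proof -
  have br: "br A B = nabla A B - nabla B A" for A B using torsion_free by simp
  have t: "nabla_L nabla xi X Y - nabla_L nabla xi Y X = nabla (br X Y) xi - nabla X (nabla Y xi) + nabla Y (nabla X xi)"
    unfolding nabla_L_def Lop_def br by (simp add: nabla_minus nabla_diff_dir algebra_simps)
  show ?thesis
    unfolding curv_vec t g_add g_diff gQ[OF gx] gP eta1_def Lop_def g_minus g_minus2 g_add2 g_diff2
    by (simp add: algebra_simps g_sym)
qed

lemma neg_g: "pseudo_riemannian_lc smult der br (\<lambda>A B. - g A B) nabla"
proof unfold_locales
  fix X Y Z :: 'v and a b :: 'f and r :: real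
  show "smult (a + b) X = smult a X + smult b X" by (rule smult_add_left)
  show "smult a (X + Y) = smult a X + smult a Y" by (rule smult_add_right)
  show "smult a (smult b X) = smult (a * b) X" by (rule smult_assoc)
  show "smult 1 X = X" by (rule smult_one)
  show "der X (a + b) = der X a + der X b" by (rule der_add_fun)
  show "der X (r *\<^sub>R a) = r *\<^sub>R der X a" by (rule der_scaleR_fun)
  show "der X (a * b) = der X a * b + a * der X b" by (rule der_mult)
  show "der (X + Y) a = der X a + der Y a" by (rule der_add_field)
  show "der (smult b X) a = b * der X a" by (rule der_smult_field)
  show "der (br X Y) a = der X (der Y a) - der Y (der X a)" by (rule br_der)
  show "- g X Y = - g Y X" by (simp add: g_sym)
  show "- g (X + Y) Z = - g X Z + - g Y Z" by (simp add: g_add)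
  show "- g (smult a X) Y = a * - g X Y" by (simp add: g_smult)
  show "(\<forall>Y. - g X Y = 0) \<Longrightarrow> X = 0" by (simp add: g_nondeg)
  show "nabla (X + Y) Z = nabla X Z + nabla Y Z" by (rule nabla_add_dir)
  show "nabla (smult a X) Y = smult a (nabla X Y)" by (rule nabla_smult_dir)
  show "nabla X (Y + Z) = nabla X Y + nabla X Z" by (rule nabla_add)
  show "nabla X (smult a Y) = smult (der X a) Y + smult a (nabla X Y)" by (rule nabla_leibniz)
  show "nabla X Y - nabla Y X = br X Y" by (rule torsion_free)
  show "der X (- g Y Z) = - g (nabla X Y) Z + - g Y (nabla X Z)" by (simp add: der_minus metric_compat)
qed

end

theorem mainTheorem3:
  fixes smult :: "'f::{comm_ring_1, real_algebra_1} \<Rightarrow> 'v::ab_group_add \<Rightarrow> 'v"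
    and der :: "'v \<Rightarrow> 'f \<Rightarrow> 'f"
    and br :: "'v \<Rightarrow> 'v \<Rightarrow> 'v"
    and g :: "'v \<Rightarrow> 'v \<Rightarrow> 'f"
    and nabla :: "'v \<Rightarrow> 'v \<Rightarrow> 'v"
    and xi X Y Z W :: 'v
    and eps :: 'f
  assumes "pseudo_riemannian_lc smult der br g nabla"
    and "eps = 1 \<or> eps = -1"
    and "g xi xi = eps"
  shows "g (curv br (nabla_tilde smult der g nabla xi eps) X Y Z) W =
      g (curv br nabla X Y Z) W
      - g (nabla_L nabla xi X Y - nabla_L nabla xi Y X) Z * eta1 g xi eps W
      + g (nabla_L nabla xi X Y - nabla_L nabla xi Y X) W * eta1 g xi eps Z
      + eps * g (Lop nabla xi X) W * g (Lop nabla xi Y) Z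
      - eps * g (Lop nabla xi X) Z * g (Lop nabla xi Y) W"
proof -
  interpret P: pseudo_riemannian_lc smult der br g nabla by fact
  from assms(2) show ?thesis
  proof
    assume e: "eps = 1"
    show ?thesis using P.main_aux[of xi X Y Z W] assms(3) e by simp
  next
    assume e: "eps = -1"
    interpret Q: pseudo_riemannian_lc smult der br "\<lambda>A B. - g A B" nabla by (rule P.neg_g)
    have q: "- g xi xi = 1" using assms(3) e by simp
    have nt: "nabla_tilde smult der (\<lambda>A B. - g A B) nabla xi 1 = nabla_tilde smult der g nabla xi (-1)"
      by (simp add: nabla_tilde_def nabla_eta_def eta1_def fun_eq_iff)
    have et: "eta1 (\<lambda>A B. - g A B) xi 1 = eta1 g xi (-1)"
      by (simp add: eta1_def fun_eq_iff)
    have "- g (curv br (nabla_tilde smult der g nabla xi (-1)) X Y Z) W =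
      - g (curv br nabla X Y Z) W
      - (- g (nabla_L nabla xi X Y - nabla_L nabla xi Y X) Z) * eta1 g xi (-1) W
      + (- g (nabla_L nabla xi X Y - nabla_L nabla xi Y X) W) * eta1 g xi (-1) Z
      + 1 * (- g (Lop nabla xi X) W) * (- g (Lop nabla xi Y) Z)
      - 1 * (- g (Lop nabla xi X) Z) * (- g (Lop nabla xi Y) W)"
      using Q.main_aux[OF q, of X Y Z W] nt et by simp
    then show ?thesis using e by (simp add: algebra_simps)
  qed
qed

end
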